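(* Let $\alpha_1,\alpha_2$ be real singular $1$-cocycles on $X$ both representing $a$, and let $\beta$ be a singular $0$-cochain on $X$ (viewed as a real-valued function on $X$) with $\alpha_1-\alpha_2=d\beta$. Let $g\in G_a$ be covered by $\widehat g\in\widehat G_a$. (1) Let $x\in X$ and assume $\widehat{\mathrm{rot}}_{x,\alpha_1}(\widehat g)$ and $\widehat{\mathrm{rot}}_{x,\alpha_2}(\widehat g)$ are defined. If $\beta$ is bounded on the orbit $\{g^i(x)\}_{i\in\mathbb{N}}$, then $\widehat{\mathrm{rot}}_{x,\alpha_1}(\widehat g)=\widehat{\mathrm{rot}}_{x,\alpha_2}(\widehat g)$. (2) Let $\mu$ be a $g$-invariant Borel probability measure on $X$ and assume $\widehat{\mathrm{rot}}_{\mu,\alpha_1}(\widehat g)$ and $\widehat{\mathrm{rot}}_{\mu,\alpha_2}(\widehat g)$ are defined. If $\int_X(\beta(g(x))-\beta(x))\,d\mu(x)=0$, then $\widehat{\mathrm{rot}}_{\mu,\alpha_1}(\widehat g)=\widehat{\mathrm{rot}}_{\mu,\alpha_2}(\widehat g)$.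
   Context: $A$ is $\mathbb{Z}$ or the discrete group $\mathbb{R}$. $X$ is a path-connected space, $a\in\mathrm{H}^1(X;A)$, $\pi\colon\widehat X_a\to X$ a principal $A$-bundle with holonomy $a$, $T_r$ the action of $r\in A$. $\widehat G_a$ is the group of bundle automorphisms of $\widehat X_a$ (homeomorphisms $\widehat g$ with $\pi\circ\widehat g=g\circ\pi$ for a homeomorphism $g$ of $X$, said to cover $g$), and $G_a$ the group of homeomorphisms of $X$ preserving $a$. For a real singular $1$-cocycle $\alpha$ representing $a$, let $\theta\colon\widehat X_a\to\mathbb{R}$ be a $0$-cochain with $d\theta=\pi^*\alpha$ and $\theta(T_r\widehat y)=\theta(\widehat y)+r$; for $x\in X$, $\rho_{x,\alpha}(\widehat g)=\theta(\widehat g(\widehat x))-\theta(\widehat x)$ with $\widehat x\in\pi^{-1}(x)$ (independent of choices); $\widehat{\mathrm{rot}}_{x,\alpha}(\widehat g)=\lim_{n\to\infty}\rho_{x,\alpha}(\widehat g^n)/n$ when it exists; for a $g$-invariant Borel probability measure $\mu$, $\widehat{\mathrm{rot}}_{\mu,\alpha}(\widehat g)=\int_X\rho_{x,\alpha}(\widehat g)\,d\mu(x)$ when it exists. *)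

theory Defs
  imports "HOL-Analysis.Analysis" "HOL-Homology.Homology" "HOL-Probability.Probability"
begin

definition vtx :: "nat \<Rightarrow> nat \<Rightarrow> real" where
  "vtx k = (\<lambda>i. if i = k then 1 else 0)"

text \<open>A real singular 1-cochain on X is a real-valued function on singular
  1-simplices ((nat => real) => 'a); a 0-cochain is a real-valued function on points.
  Coboundary of a 0-cochain b: (d b)(s) = b(s(e1)) - b(s(e0)) (face 0 is the endpoint e1).\<close>
definition cobdry0 :: "('a \<Rightarrow> real) \<Rightarrow> ((nat \<Rightarrow> real) \<Rightarrow> 'a) \<Rightarrow> real" where
  "cobdry0 b \<sigma> = b (\<sigma> (vtx 1)) - b (\<sigma> (vtx 0))"

definition cocycle1 :: "'a topology \<Rightarrow> (((nat \<Rightarrow> real) \<Rightarrow> 'a) \<Rightarrow> real) \<Rightarrow> bool" where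
  "cocycle1 X \<alpha> \<longleftrightarrow> (\<forall>\<tau>. singular_simplex 2 X \<tau> \<longrightarrow>
      \<alpha> (singular_face 2 0 \<tau>) - \<alpha> (singular_face 2 1 \<tau>) + \<alpha> (singular_face 2 2 \<tau>) = 0)"

definition principal_bundle ::
  "real set \<Rightarrow> 'a topology \<Rightarrow> 'b topology \<Rightarrow> ('b \<Rightarrow> 'a) \<Rightarrow> (real \<Rightarrow> 'b \<Rightarrow> 'b) \<Rightarrow> bool" where
  "principal_bundle A X Xh \<pi> T \<longleftrightarrow>
     continuous_map Xh X \<pi> \<and> \<pi> ` topspace Xh = topspace X \<and>
     (\<forall>r\<in>A. homeomorphic_map Xh Xh (T r)) \<and>
     (\<forall>y\<in>topspace Xh. T 0 y = y) \<and>
     (\<forall>r\<in>A. \<forall>s\<in>A. \<forall>y\<in>topspace Xh. T (r + s) y = T r (T s y)) \<and>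
     (\<forall>r\<in>A. \<forall>y\<in>topspace Xh. \<pi> (T r y) = \<pi> y) \<and>
     (\<forall>y\<in>topspace Xh. \<forall>y'\<in>topspace Xh. \<pi> y = \<pi> y' \<longrightarrow> (\<exists>!r. r \<in> A \<and> y' = T r y)) \<and>
     (\<forall>x\<in>topspace X. \<exists>U \<phi>. openin X U \<and> x \<in> U \<and>
        homeomorphic_map (subtopology Xh {y\<in>topspace Xh. \<pi> y \<in> U})
                         (prod_topology (subtopology X U) (discrete_topology A)) \<phi> \<and>
        (\<forall>y\<in>topspace Xh. \<pi> y \<in> U \<longrightarrow> fst (\<phi> y) = \<pi> y) \<and>
        (\<forall>r\<in>A. \<forall>y\<in>topspace Xh. \<pi> y \<in> U \<longrightarrow> snd (\<phi> (T r y)) = r + snd (\<phi> y)))"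

definition loop1 :: "'a topology \<Rightarrow> ((nat \<Rightarrow> real) \<Rightarrow> 'a) \<Rightarrow> bool" where
  "loop1 X \<sigma> \<longleftrightarrow> singular_simplex 1 X \<sigma> \<and> \<sigma> (vtx 0) = \<sigma> (vtx 1)"

definition holonomy_is ::
  "'b topology \<Rightarrow> ('b \<Rightarrow> 'a) \<Rightarrow> (real \<Rightarrow> 'b \<Rightarrow> 'b) \<Rightarrow> ((nat \<Rightarrow> real) \<Rightarrow> 'a) \<Rightarrow> real \<Rightarrow> bool" where
  "holonomy_is Xh \<pi> T \<sigma> r \<longleftrightarrow>
     (\<forall>\<sigma>h. singular_simplex 1 Xh \<sigma>h \<and> simplex_map 1 \<pi> \<sigma>h = \<sigma> \<longrightarrow> \<sigma>h (vtx 1) = T r (\<sigma>h (vtx 0)))"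

text \<open>The real 1-cocycle alpha represents the holonomy class a of the bundle
  (the class in H^1(X;A) = Hom(H_1 X, A), pushed to real coefficients):
  alpha is a cocycle whose value on every loop is the holonomy along that loop.\<close>
definition represents_holonomy ::
  "'a topology \<Rightarrow> 'b topology \<Rightarrow> ('b \<Rightarrow> 'a) \<Rightarrow> (real \<Rightarrow> 'b \<Rightarrow> 'b) \<Rightarrow>
   (((nat \<Rightarrow> real) \<Rightarrow> 'a) \<Rightarrow> real) \<Rightarrow> bool" where
  "represents_holonomy X Xh \<pi> T \<alpha> \<longleftrightarrow>
     cocycle1 X \<alpha> \<and> (\<forall>\<sigma>. loop1 X \<sigma> \<longrightarrow> holonomy_is Xh \<pi> T \<sigma> (\<alpha> \<sigma>))"

text \<open>g preserves the holonomy class a (g in G_a): homeomorphism with g^* a = a.\<close>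
definition preserves_holonomy ::
  "real set \<Rightarrow> 'a topology \<Rightarrow> 'b topology \<Rightarrow> ('b \<Rightarrow> 'a) \<Rightarrow> (real \<Rightarrow> 'b \<Rightarrow> 'b) \<Rightarrow> ('a \<Rightarrow> 'a) \<Rightarrow> bool" where
  "preserves_holonomy A X Xh \<pi> T g \<longleftrightarrow>
     homeomorphic_map X X g \<and>
     (\<forall>\<sigma> r. loop1 X \<sigma> \<and> r \<in> A \<longrightarrow>
        (holonomy_is Xh \<pi> T (simplex_map 1 g \<sigma>) r \<longleftrightarrow> holonomy_is Xh \<pi> T \<sigma> r))"

definition covers ::
  "'a topology \<Rightarrow> 'b topology \<Rightarrow> ('b \<Rightarrow> 'a) \<Rightarrow> ('b \<Rightarrow> 'b) \<Rightarrow> ('a \<Rightarrow> 'a) \<Rightarrow> bool" where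
  "covers X Xh \<pi> gh g \<longleftrightarrow> homeomorphic_map Xh Xh gh \<and> homeomorphic_map X X g \<and>
     (\<forall>y\<in>topspace Xh. \<pi> (gh y) = g (\<pi> y))"

definition potential ::
  "real set \<Rightarrow> 'b topology \<Rightarrow> ('b \<Rightarrow> 'a) \<Rightarrow> (real \<Rightarrow> 'b \<Rightarrow> 'b) \<Rightarrow>
   (((nat \<Rightarrow> real) \<Rightarrow> 'a) \<Rightarrow> real) \<Rightarrow> ('b \<Rightarrow> real) \<Rightarrow> bool" where
  "potential A Xh \<pi> T \<alpha> \<theta> \<longleftrightarrow>
     (\<forall>\<sigma>h. singular_simplex 1 Xh \<sigma>h \<longrightarrow> cobdry0 \<theta> \<sigma>h = \<alpha> (simplex_map 1 \<pi> \<sigma>h)) \<and>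
     (\<forall>r\<in>A. \<forall>y\<in>topspace Xh. \<theta> (T r y) = \<theta> y + r)"

definition rho ::
  "real set \<Rightarrow> 'b topology \<Rightarrow> ('b \<Rightarrow> 'a) \<Rightarrow> (real \<Rightarrow> 'b \<Rightarrow> 'b) \<Rightarrow>
   (((nat \<Rightarrow> real) \<Rightarrow> 'a) \<Rightarrow> real) \<Rightarrow> 'a \<Rightarrow> ('b \<Rightarrow> 'b) \<Rightarrow> real" where
  "rho A Xh \<pi> T \<alpha> x gh =
     (let \<theta> = (SOME \<theta>. potential A Xh \<pi> T \<alpha> \<theta>);
          xh = (SOME y. y \<in> topspace Xh \<and> \<pi> y = x)
      in \<theta> (gh xh) - \<theta> xh)"

text \<open>rot_{x,alpha}: value of the limit; it "is defined" when the sequence converges.\<close>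
definition rot_seq where
  "rot_seq A Xh \<pi> T \<alpha> x gh = (\<lambda>n::nat. rho A Xh \<pi> T \<alpha> x (gh ^^ n) / real n)"

definition rot_pt where
  "rot_pt A Xh \<pi> T \<alpha> x gh = lim (rot_seq A Xh \<pi> T \<alpha> x gh)"

text \<open>rot_{mu,alpha}: defined when the integrand is integrable.\<close>
definition rot_meas where
  "rot_meas A Xh \<pi> T \<alpha> M gh = integral\<^sup>L M (\<lambda>x. rho A Xh \<pi> T \<alpha> x gh)"

definition borel_of :: "'a topology \<Rightarrow> 'a set set" where
  "borel_of X = sigma_sets (topspace X) {U. openin X U}"

end

theory Submission
  imports Defs
begin

lemma vtx_in: "k \<le> 1 \<Longrightarrow> vtx k \<in> standard_simplex 1"
  unfolding standard_simplex_def vtx_def by (cases k) auto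

lemma conv_bounds:
  fixes a s t :: real
  assumes "0 \<le> a" "a \<le> 1"
  shows "min s t \<le> t + (s - t) * a \<and> t + (s - t) * a \<le> max s t"
proof -
  have eq: "t + (s - t) * a = (1 - a) * t + a * s" by (simp add: algebra_simps)
  have "(1 - a) * t + a * s \<le> (1 - a) * max s t + a * max s t"
    using assms by (intro add_mono mult_left_mono) auto
  moreover have "(1 - a) * min s t + a * min s t \<le> (1 - a) * t + a * s"
    using assms by (intro add_mono mult_left_mono) auto
  ultimately show ?thesis unfolding eq by (simp add: algebra_simps)
qed

lemma fiber_const:
  assumes pb: "principal_bundle A X Xh \<pi> T"
    and H2: "\<forall>y\<in>topspace Xh. \<forall>r\<in>A. h (T r y) = h y"
    and y: "y \<in> topspace Xh" "y' \<in> topspace Xh" "\<pi> y = \<pi> y'"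
  shows "h y = h y'"
proof -
  from pb y obtain r where "r \<in> A" "y' = T r y" unfolding principal_bundle_def by blast
  then show ?thesis using H2 y by simp
qed

lemma local_lift:
  assumes pb: "principal_bundle A X Xh \<pi> T"
    and H1: "\<forall>\<sigma>h. singular_simplex 1 Xh \<sigma>h \<longrightarrow> h (\<sigma>h (vtx 1)) = h (\<sigma>h (vtx 0))"
    and H2: "\<forall>y\<in>topspace Xh. \<forall>r\<in>A. h (T r y) = h y"
    and p: "pathin X p" and t: "t \<in> {0..1}"
  shows "\<exists>e>0. \<forall>s\<in>{0..1}. \<bar>s - t\<bar> < e \<longrightarrow>
           (\<forall>y\<in>topspace Xh. \<forall>y'\<in>topspace Xh. \<pi> y = p t \<and> \<pi> y' = p s \<longrightarrow> h y = h y')"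
proof -
  have pt: "p t \<in> topspace X" using p t by (auto simp: pathin_def continuous_map)
  from pb have sur: "\<pi> ` topspace Xh = topspace X" unfolding principal_bundle_def by blast
  obtain y0 where y0: "y0 \<in> topspace Xh" "\<pi> y0 = p t" using sur pt by force
  from pb have loc: "\<forall>x\<in>topspace X. \<exists>U \<phi>. openin X U \<and> x \<in> U \<and>
        homeomorphic_map (subtopology Xh {y\<in>topspace Xh. \<pi> y \<in> U})
                         (prod_topology (subtopology X U) (discrete_topology A)) \<phi> \<and>
        (\<forall>y\<in>topspace Xh. \<pi> y \<in> U \<longrightarrow> fst (\<phi> y) = \<pi> y)"
    unfolding principal_bundle_def by blast
  from loc pt obtain U \<phi> where U: "openin X U" "p t \<in> U"
    and hom: "homeomorphic_map (subtopology Xh {y\<in>topspace Xh. \<pi> y \<in> U})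
                         (prod_topology (subtopology X U) (discrete_topology A)) \<phi>"
    and fst\<phi>: "\<forall>y\<in>topspace Xh. \<pi> y \<in> U \<longrightarrow> fst (\<phi> y) = \<pi> y"
    by blast
  from hom obtain \<psi> where hm: "homeomorphic_maps (subtopology Xh {y\<in>topspace Xh. \<pi> y \<in> U})
                         (prod_topology (subtopology X U) (discrete_topology A)) \<phi> \<psi>"
    using homeomorphic_map_maps by blast
  have Usub: "U \<subseteq> topspace X" using U openin_subset by blast
  have ts1: "topspace (subtopology Xh {y\<in>topspace Xh. \<pi> y \<in> U}) = {y\<in>topspace Xh. \<pi> y \<in> U}"
    by auto
  have ts2: "topspace (prod_topology (subtopology X U) (discrete_topology A)) = U \<times> A"
    using Usub by auto
  have \<psi>c: "continuous_map (prod_topology (subtopology X U) (discrete_topology A))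
            (subtopology Xh {y\<in>topspace Xh. \<pi> y \<in> U}) \<psi>"
    using hm by (simp add: homeomorphic_maps_def)
  have \<psi>\<phi>: "\<And>y. y \<in> topspace Xh \<Longrightarrow> \<pi> y \<in> U \<Longrightarrow> \<psi> (\<phi> y) = y"
    using hm unfolding homeomorphic_maps_def ts1 by auto
  have \<phi>\<psi>: "\<And>z. z \<in> U \<times> A \<Longrightarrow> \<phi> (\<psi> z) = z"
    using hm unfolding homeomorphic_maps_def ts2 by auto
  have \<phi>in: "\<phi> y0 \<in> U \<times> A"
    using hm y0 U(2) unfolding homeomorphic_maps_def ts2 continuous_map_def Pi_iff by auto
  define r0 where "r0 = snd (\<phi> y0)"
  have r0: "r0 \<in> A" using \<phi>in r0_def by auto
  have \<phi>y0: "\<phi> y0 = (p t, r0)" using fst\<phi> y0 U(2) r0_def by (metis prod.collapse)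
  have \<psi>in: "\<And>z. z \<in> U \<times> A \<Longrightarrow> \<psi> z \<in> topspace Xh \<and> \<pi> (\<psi> z) \<in> U"
    using \<psi>c unfolding continuous_map_def ts2 Pi_iff by auto
  have \<pi>\<psi>: "\<And>z. z \<in> U \<times> A \<Longrightarrow> \<pi> (\<psi> z) = fst z"
    using \<psi>in \<phi>\<psi> fst\<phi> by metis
  define W where "W = {u\<in>{0..1::real}. p u \<in> U}"
  have pc: "continuous_map (top_of_set {0..1}) X p" using p by (simp add: pathin_def)
  have "openin (top_of_set {0..1}) {u \<in> topspace (top_of_set {0..1::real}). p u \<in> U}"
    using pc U(1) by (rule openin_continuous_map_preimage)
  then have Wo: "openin (top_of_set {0..1}) W" by (simp add: W_def)
  have tW: "t \<in> W" using t U(2) W_def by auto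
  obtain e where e: "e > 0" "\<And>u. u \<in> {0..1} \<Longrightarrow> dist u t < e \<Longrightarrow> u \<in> W"
    using Wo tW unfolding openin_euclidean_subtopology_iff by meson
  show ?thesis
  proof (intro exI[of _ e] conjI e(1) ballI impI allI)
    fix s y y' assume s: "s \<in> {0..1::real}" "\<bar>s - t\<bar> < e"
      and yy: "y \<in> topspace Xh" "y' \<in> topspace Xh" "\<pi> y = p t \<and> \<pi> y' = p s"
    define q where "q = (\<lambda>v::nat\<Rightarrow>real. t + (s - t) * v 1)"
    define \<sigma>h where "\<sigma>h = restrict (\<lambda>v. \<psi> (p (q v), r0)) (standard_simplex 1)"
    have qW: "q v \<in> W" if "v \<in> standard_simplex 1" for v
    proof -
      have "\<forall>i. 0 \<le> v i \<and> v i \<le> 1" using that unfolding standard_simplex_def by blast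
      then have v1: "0 \<le> v 1" "v 1 \<le> 1" by auto
      have "q v \<in> {0..1}" using conv_bounds[OF v1, of s t] s t unfolding q_def by auto
      moreover have "dist (q v) t < e"
      proof -
        have "\<bar>(s - t) * v 1\<bar> \<le> \<bar>s - t\<bar>" using v1 by (simp add: abs_mult mult_left_le)
        then show ?thesis using s unfolding q_def dist_real_def by simp
      qed
      ultimately show ?thesis using e by blast
    qed
    have qc: "continuous_map (subtopology (powertop_real UNIV) (standard_simplex 1)) (top_of_set W) q"
    proof -
      have "continuous_map (powertop_real UNIV) euclideanreal q"
        unfolding q_def
        by (intro continuous_map_add continuous_map_real_mult_left continuous_map_product_projection)
           auto
      then show ?thesis
        using qW by (auto simp: continuous_map_in_subtopology intro: continuous_map_from_subtopology)
    qed
    have "continuous_map (subtopology (top_of_set {0..1}) W) X p"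
      by (rule continuous_map_from_subtopology[OF pc])
    moreover have "subtopology (top_of_set {0..1}) W = top_of_set W"
      by (simp add: subtopology_subtopology W_def Int_absorb1 subset_eq)
    ultimately have pW0: "continuous_map (top_of_set W) X p" by simp
    have pW: "continuous_map (top_of_set W) (subtopology X U) p"
      using pW0 by (auto simp: continuous_map_in_subtopology W_def)
    have c1: "continuous_map (subtopology (powertop_real UNIV) (standard_simplex 1))
             (prod_topology (subtopology X U) (discrete_topology A)) (\<lambda>v. (p (q v), r0))"
      using r0 by (intro continuous_map_pairedI continuous_map_compose[OF qc pW, unfolded o_def]) auto
    have c2: "continuous_map (subtopology (powertop_real UNIV) (standard_simplex 1)) Xh (\<lambda>v. \<psi> (p (q v), r0))"
      using continuous_map_compose[OF c1 \<psi>c] unfolding o_def continuous_map_in_subtopology by blast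
    have ss: "singular_simplex 1 Xh \<sigma>h"
    proof -
      have "continuous_map (subtopology (powertop_real UNIV) (standard_simplex 1)) Xh \<sigma>h"
        by (rule continuous_map_eq[OF c2]) (simp add: \<sigma>h_def)
      moreover have "\<sigma>h \<in> extensional (standard_simplex 1)" by (simp add: \<sigma>h_def)
      ultimately show ?thesis unfolding singular_simplex_def by blast
    qed
    have "h (\<sigma>h (vtx 1)) = h (\<sigma>h (vtx 0))" using H1 ss by blast
    moreover have "\<sigma>h (vtx 0) = y0"
    proof -
      have "\<sigma>h (vtx 0) = \<psi> (p t, r0)" using vtx_in[of 0] by (simp add: \<sigma>h_def q_def vtx_def)
      also have "\<dots> = y0" using \<psi>\<phi>[of y0] y0 U(2) \<phi>y0 by simp
      finally show ?thesis .
    qed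
    moreover have "p s \<in> U" using qW[OF vtx_in[of 1]] by (simp add: q_def vtx_def W_def)
    then have z1: "(p s, r0) \<in> U \<times> A" using r0 by simp
    have "\<sigma>h (vtx 1) = \<psi> (p s, r0)"
      using vtx_in[of 1] by (simp add: \<sigma>h_def q_def vtx_def)
    ultimately have "h (\<psi> (p s, r0)) = h y0" by simp
    moreover have "h y = h y0"
      using yy(3) y0(2) by (intro fiber_const[OF pb H2 yy(1) y0(1)]) simp
    moreover have "h y' = h (\<psi> (p s, r0))"
      using yy(3) \<pi>\<psi>[OF z1] \<psi>in[OF z1] by (intro fiber_const[OF pb H2 yy(2)]) auto
    ultimately show "h y = h y'" by simp
  qed
qed

lemma global_const:
  assumes pb: "principal_bundle A X Xh \<pi> T"
    and H1: "\<forall>\<sigma>h. singular_simplex 1 Xh \<sigma>h \<longrightarrow> h (\<sigma>h (vtx 1)) = h (\<sigma>h (vtx 0))"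
    and H2: "\<forall>y\<in>topspace Xh. \<forall>r\<in>A. h (T r y) = h y"
    and X: "path_connected_space X"
    and y: "y \<in> topspace Xh" "y' \<in> topspace Xh"
  shows "h y = h y'"
proof -
  from pb have sur: "\<pi> ` topspace Xh = topspace X" unfolding principal_bundle_def by blast
  have xs: "\<pi> y \<in> topspace X" "\<pi> y' \<in> topspace X" using sur y by auto
  then obtain p where p: "pathin X p" "p 0 = \<pi> y" "p 1 = \<pi> y'"
    using X unfolding path_connected_space_def by blast
  have pin: "p s \<in> topspace X" if "s \<in> {0..1}" for s
    using p(1) that by (auto simp: pathin_def continuous_map)
  have ex: "\<exists>z\<in>topspace Xh. \<pi> z = p s" if "s \<in> {0..1}" for s
    using sur pin[OF that] by force
  define P where "P = (\<lambda>s. \<forall>z\<in>topspace Xh. \<pi> z = p s \<longrightarrow> h z = h y)"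
  have "P 1"
  proof (rule connected_induction_simple[of "{0..1::real}" 0 1 P])
    show "connected {0..1::real}" by simp
    show "(0::real) \<in> {0..1}" "(1::real) \<in> {0..1}" by auto
    show "P 0" unfolding P_def using p(2) y(1)
      by (metis fiber_const[OF pb H2])
  next
    fix a :: real assume a: "a \<in> {0..1}"
    obtain e where e: "e > 0" "\<forall>s\<in>{0..1}. \<bar>s - a\<bar> < e \<longrightarrow>
           (\<forall>y\<in>topspace Xh. \<forall>y'\<in>topspace Xh. \<pi> y = p a \<and> \<pi> y' = p s \<longrightarrow> h y = h y')"
      using local_lift[OF pb H1 H2 p(1) a] by blast
    obtain z0 where z0: "z0 \<in> topspace Xh" "\<pi> z0 = p a" using ex[OF a] by blast
    show "\<exists>T. openin (top_of_set {0..1}) T \<and> a \<in> T \<and> (\<forall>x\<in>T. \<forall>y\<in>T. P x \<longrightarrow> P y)"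
    proof (intro exI conjI)
      show "openin (top_of_set {0..1}) ({0..1} \<inter> ball a e)"
        by (rule openin_open_Int) auto
      show "a \<in> {0..1} \<inter> ball a e" using a e by auto
      show "\<forall>x\<in>{0..1} \<inter> ball a e. \<forall>y\<in>{0..1} \<inter> ball a e. P x \<longrightarrow> P y"
      proof (intro ballI impI)
        fix x1 x2 assume x1: "x1 \<in> {0..1} \<inter> ball a e" and x2: "x2 \<in> {0..1} \<inter> ball a e" and Px: "P x1"
        have d1: "\<bar>x1 - a\<bar> < e" and d2: "\<bar>x2 - a\<bar> < e"
          using x1 x2 by (auto simp: dist_real_def abs_minus_commute)
        obtain z1 where z1: "z1 \<in> topspace Xh" "\<pi> z1 = p x1" using ex x1 by blast
        have "h z0 = h z1" using e(2) x1 d1 z0 z1 by blast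
        moreover have "h z1 = h y" using Px z1 unfolding P_def by blast
        moreover have "h z0 = h z" if "z \<in> topspace Xh" "\<pi> z = p x2" for z
          using e(2) x2 d2 z0 that by blast
        ultimately show "P x2" unfolding P_def by metis
      qed
    qed
  qed
  then show ?thesis unfolding P_def using y p(3) by metis
qed

theorem proposition2p11:
  fixes A :: "real set" and X :: "'a topology" and Xh :: "'b topology"
    and \<pi> :: "'b \<Rightarrow> 'a" and T :: "real \<Rightarrow> 'b \<Rightarrow> 'b"
    and \<alpha>1 \<alpha>2 :: "((nat \<Rightarrow> real) \<Rightarrow> 'a) \<Rightarrow> real" and \<beta> :: "'a \<Rightarrow> real"
    and g :: "'a \<Rightarrow> 'a" and gh :: "'b \<Rightarrow> 'b"
  assumes A: "A = range real_of_int \<or> A = UNIV"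
    and X: "path_connected_space X"
    and pb: "principal_bundle A X Xh \<pi> T"
    and rep1: "represents_holonomy X Xh \<pi> T \<alpha>1"
    and rep2: "represents_holonomy X Xh \<pi> T \<alpha>2"
    and pot1: "\<exists>\<theta>. potential A Xh \<pi> T \<alpha>1 \<theta>"
    and pot2: "\<exists>\<theta>. potential A Xh \<pi> T \<alpha>2 \<theta>"
    and dbeta: "\<forall>\<sigma>. singular_simplex 1 X \<sigma> \<longrightarrow> \<alpha>1 \<sigma> - \<alpha>2 \<sigma> = cobdry0 \<beta> \<sigma>"
    and gGa: "preserves_holonomy A X Xh \<pi> T g"
    and cov: "covers X Xh \<pi> gh g"
  shows "(\<forall>x\<in>topspace X.
            convergent (rot_seq A Xh \<pi> T \<alpha>1 x gh) \<and> convergent (rot_seq A Xh \<pi> T \<alpha>2 x gh) \<and>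
            bounded (\<beta> ` range (\<lambda>i. (g ^^ i) x))
            \<longrightarrow> rot_pt A Xh \<pi> T \<alpha>1 x gh = rot_pt A Xh \<pi> T \<alpha>2 x gh)
       \<and> (\<forall>M :: 'a measure.
            prob_space M \<and> space M = topspace X \<and> sets M = borel_of X \<and>
            g \<in> measurable M M \<and> (\<forall>B\<in>sets M. emeasure M (g -` B \<inter> space M) = emeasure M B) \<and>
            integrable M (\<lambda>x. rho A Xh \<pi> T \<alpha>1 x gh) \<and> integrable M (\<lambda>x. rho A Xh \<pi> T \<alpha>2 x gh) \<and>
            (\<integral>x. (\<beta> (g x) - \<beta> x) \<partial>M) = 0
            \<longrightarrow> rot_meas A Xh \<pi> T \<alpha>1 M gh = rot_meas A Xh \<pi> T \<alpha>2 M gh)"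
proof -
  define \<theta>1 where "\<theta>1 = (SOME \<theta>. potential A Xh \<pi> T \<alpha>1 \<theta>)"
  define \<theta>2 where "\<theta>2 = (SOME \<theta>. potential A Xh \<pi> T \<alpha>2 \<theta>)"
  have P1: "potential A Xh \<pi> T \<alpha>1 \<theta>1" unfolding \<theta>1_def using pot1 by (rule someI_ex)
  have P2: "potential A Xh \<pi> T \<alpha>2 \<theta>2" unfolding \<theta>2_def using pot2 by (rule someI_ex)
  define h where "h = (\<lambda>y. \<theta>1 y - \<theta>2 y - \<beta> (\<pi> y))"
  have \<pi>c: "continuous_map Xh X \<pi>" using pb unfolding principal_bundle_def by blast
  have H1: "\<forall>\<sigma>h. singular_simplex 1 Xh \<sigma>h \<longrightarrow> h (\<sigma>h (vtx 1)) = h (\<sigma>h (vtx 0))"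
  proof (intro allI impI)
    fix \<sigma>h assume ss: "singular_simplex 1 Xh \<sigma>h"
    define sm where "sm = simplex_map 1 \<pi> \<sigma>h"
    have sms: "singular_simplex 1 X sm" unfolding sm_def using ss \<pi>c by (rule singular_simplex_simplex_map)
    have e1: "cobdry0 \<theta>1 \<sigma>h = \<alpha>1 sm" using P1 ss unfolding potential_def sm_def by blast
    have e2: "cobdry0 \<theta>2 \<sigma>h = \<alpha>2 sm" using P2 ss unfolding potential_def sm_def by blast
    have e3: "\<alpha>1 sm - \<alpha>2 sm = cobdry0 \<beta> sm" using dbeta sms by blast
    have v: "sm (vtx k) = \<pi> (\<sigma>h (vtx k))" if "k \<le> 1" for k
      using vtx_in[OF that] unfolding sm_def simplex_map_def by simp
    show "h (\<sigma>h (vtx 1)) = h (\<sigma>h (vtx 0))"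
      using e1 e2 e3 v[of 0] v[of 1] unfolding cobdry0_def h_def by simp
  qed
  have H2: "\<forall>y\<in>topspace Xh. \<forall>r\<in>A. h (T r y) = h y"
    using P1 P2 pb unfolding potential_def principal_bundle_def h_def by simp
  have hc: "h y = h y'" if "y \<in> topspace Xh" "y' \<in> topspace Xh" for y y'
    using global_const[OF pb H1 H2 X that] .
  from pb have sur: "\<pi> ` topspace Xh = topspace X" unfolding principal_bundle_def by blast
  have key: "rho A Xh \<pi> T \<alpha>1 x k - rho A Xh \<pi> T \<alpha>2 x k
      = \<beta> (\<pi> (k (SOME y. y \<in> topspace Xh \<and> \<pi> y = x))) - \<beta> x"
    if x: "x \<in> topspace X" and k: "k (SOME y. y \<in> topspace Xh \<and> \<pi> y = x) \<in> topspace Xh" for x k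
  proof -
    define xh where "xh = (SOME y. y \<in> topspace Xh \<and> \<pi> y = x)"
    have xh: "xh \<in> topspace Xh \<and> \<pi> xh = x" unfolding xh_def
      by (rule someI_ex) (use sur x in force)
    have "h (k xh) = h xh" using hc k xh unfolding xh_def by blast
    then show ?thesis
      unfolding rho_def Let_def \<theta>1_def[symmetric] \<theta>2_def[symmetric] xh_def[symmetric]
      using xh by (simp add: h_def algebra_simps)
  qed
  have ghc: "homeomorphic_map Xh Xh gh" and ghpi: "\<forall>y\<in>topspace Xh. \<pi> (gh y) = g (\<pi> y)"
    using cov unfolding covers_def by blast+
  have ghin: "gh y \<in> topspace Xh" if "y \<in> topspace Xh" for y
    using homeomorphic_imp_surjective_map[OF ghc] that by blast
  have iter: "(gh ^^ n) y \<in> topspace Xh \<and> \<pi> ((gh ^^ n) y) = (g ^^ n) (\<pi> y)"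
    if "y \<in> topspace Xh" for y n
    by (induction n) (use that ghin ghpi in auto)
  have xhin: "(SOME y. y \<in> topspace Xh \<and> \<pi> y = x) \<in> topspace Xh \<and> \<pi> (SOME y. y \<in> topspace Xh \<and> \<pi> y = x) = x"
    if "x \<in> topspace X" for x
    by (rule someI_ex) (use sur that in force)
  have keyn: "rho A Xh \<pi> T \<alpha>1 x (gh ^^ n) - rho A Xh \<pi> T \<alpha>2 x (gh ^^ n) = \<beta> ((g ^^ n) x) - \<beta> x"
    if x: "x \<in> topspace X" for x n
    using key[OF x, of "gh ^^ n"] iter[of _ n] xhin[OF x] by simp
  show ?thesis
  proof (intro conjI ballI allI impI)
    fix x assume x: "x \<in> topspace X" and
      c: "convergent (rot_seq A Xh \<pi> T \<alpha>1 x gh) \<and> convergent (rot_seq A Xh \<pi> T \<alpha>2 x gh) \<and>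
            bounded (\<beta> ` range (\<lambda>i. (g ^^ i) x))"
    obtain B where B: "\<And>i. \<bar>\<beta> ((g ^^ i) x)\<bar> \<le> B"
      using c unfolding bounded_iff by auto
    let ?s1 = "rot_seq A Xh \<pi> T \<alpha>1 x gh" and ?s2 = "rot_seq A Xh \<pi> T \<alpha>2 x gh"
    have d: "?s1 n - ?s2 n = (\<beta> ((g ^^ n) x) - \<beta> x) / real n" for n
      unfolding rot_seq_def diff_divide_distrib[symmetric] using keyn[OF x, of n] by simp
    have "(\<lambda>n. ?s1 n - ?s2 n) \<longlonglongrightarrow> 0"
    proof (rule Lim_null_comparison)
      show "\<forall>\<^sub>F n in sequentially. norm (?s1 n - ?s2 n) \<le> 2 * B * (1 / real n)"
      proof (intro always_eventually allI)
        fix n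
        have "\<bar>\<beta> ((g ^^ n) x) - \<beta> x\<bar> \<le> 2 * B" using B[of n] B[of 0] by simp
        then show "norm (?s1 n - ?s2 n) \<le> 2 * B * (1 / real n)"
          unfolding d by (simp add: divide_right_mono)
      qed
      show "(\<lambda>n. 2 * B * (1 / real n)) \<longlonglongrightarrow> 0"
        using tendsto_mult_left[OF lim_inverse_n', of "2 * B"] by simp
    qed
    moreover have "(\<lambda>n. ?s1 n - ?s2 n) \<longlonglongrightarrow> lim ?s1 - lim ?s2"
      using c by (intro tendsto_diff) (simp_all add: convergent_LIMSEQ_iff)
    ultimately have "lim ?s1 - lim ?s2 = 0" using LIMSEQ_unique by blast
    then show "rot_pt A Xh \<pi> T \<alpha>1 x gh = rot_pt A Xh \<pi> T \<alpha>2 x gh"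
      unfolding rot_pt_def by simp
  next
    fix M :: "'a measure"
    assume m: "prob_space M \<and> space M = topspace X \<and> sets M = borel_of X \<and>
            g \<in> measurable M M \<and> (\<forall>B\<in>sets M. emeasure M (g -` B \<inter> space M) = emeasure M B) \<and>
            integrable M (\<lambda>x. rho A Xh \<pi> T \<alpha>1 x gh) \<and> integrable M (\<lambda>x. rho A Xh \<pi> T \<alpha>2 x gh) \<and>
            (\<integral>x. (\<beta> (g x) - \<beta> x) \<partial>M) = 0"
    have k1: "rho A Xh \<pi> T \<alpha>1 x gh - rho A Xh \<pi> T \<alpha>2 x gh = \<beta> (g x) - \<beta> x"
      if "x \<in> space M" for x
      using keyn[of x 1] that m by simp
    have "rot_meas A Xh \<pi> T \<alpha>1 M gh - rot_meas A Xh \<pi> T \<alpha>2 M gh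
        = (\<integral>x. (rho A Xh \<pi> T \<alpha>1 x gh - rho A Xh \<pi> T \<alpha>2 x gh) \<partial>M)"
      unfolding rot_meas_def using m by (simp add: Bochner_Integration.integral_diff)
    also have "\<dots> = (\<integral>x. (\<beta> (g x) - \<beta> x) \<partial>M)"
      using k1 by (intro Bochner_Integration.integral_cong) auto
    finally show "rot_meas A Xh \<pi> T \<alpha>1 M gh = rot_meas A Xh \<pi> T \<alpha>2 M gh" using m by simp
  qed
qed

end
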